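(* For $n,m\in\mathbb{N}_0$, $$\int_0^\pi x^n\sin^{2m}(x)\,dx=\frac{\pi^n}{4^m}\Bigg(\frac{\pi\binom{2m}{m}}{n+1}-n!\sum_{j=1}^{\lfloor n/2\rfloor}\frac{(-1)^j}{(2\pi)^{2j-1}(n+1-2j)!}\sum_{k=1}^{\infty}\frac{(-1)^k}{k^{2j}}\binom{2m}{m+k}\Bigg).$$
   Context: $\binom{2m}{m+k}=0$ for integers $k>m$. An empty sum is $0$. *)

theory Defs
  imports "HOL-Analysis.Analysis"
begin

end

theory Submission
  imports Defs
begin

primrec cs :: "real \<Rightarrow> nat \<Rightarrow> real \<times> real" where
  "cs a 0 = (0, 0)"
| "cs a (Suc n) = (- (real n + 1) / a * snd (cs a n),
                   (real n + 1) / a * fst (cs a n) - (pi ^ Suc n) / a)"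

lemma pow_deriv_aux: "(x::real) ^ n + real n * x ^ (n - Suc 0) * x = (real n + 1) * x ^ n"
  by (cases n) (auto simp: algebra_simps)

lemma cs_integral:
  fixes a :: real
  assumes a: "a \<noteq> 0" and s: "sin (a * pi) = 0" and c: "cos (a * pi) = 1"
    and s': "sin (pi * a) = 0" and c': "cos (pi * a) = 1"
  shows "((\<lambda>x. x ^ n * cos (a * x)) has_integral fst (cs a n)) {0..pi} \<and>
         ((\<lambda>x. x ^ n * sin (a * x)) has_integral snd (cs a n)) {0..pi}"
proof (induction n)
  case 0
  have 1: "((\<lambda>x. cos (a * x)) has_integral (sin (a*pi)/a - sin (a*0)/a)) {0..pi}"
    apply (rule fundamental_theorem_of_calculus)
     apply simp
    apply (auto simp: has_real_derivative_iff_has_vector_derivative[symmetric] a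
            intro!: derivative_eq_intros)
    done
  have 2: "((\<lambda>x. sin (a * x)) has_integral (- cos (a*pi)/a - (- cos (a*0)/a))) {0..pi}"
    apply (rule fundamental_theorem_of_calculus)
     apply simp
    apply (auto simp: has_real_derivative_iff_has_vector_derivative[symmetric] a
            intro!: derivative_eq_intros)
    done
  show ?case using 1 2 s c by simp
next
  case (Suc n)
  have A: "((\<lambda>x. (sin (a * x) / a) * ((real n + 1) * x ^ n)) has_integral
         ((sin (a*pi)/a) * pi ^ Suc n - (sin (a*0)/a) * 0 ^ Suc n - fst (cs a (Suc n)))) {0..pi}"
  proof (rule has_integral_eq_rhs)
    show "((\<lambda>x. (sin (a * x) / a) * ((real n + 1) * x ^ n)) has_integral
         ((real n + 1) / a * snd (cs a n))) {0..pi}"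
    proof -
      have "(\<lambda>x. (sin (a * x) / a) * ((real n + 1) * x ^ n)) = (\<lambda>x. ((real n + 1) / a) * (x ^ n * sin (a * x)))"
        by (rule ext) (simp add: field_simps a)
      then show ?thesis
        using has_integral_cmul[OF conjunct2[OF Suc.IH], of "(real n + 1) / a"] by simp
    qed
  qed (use s' c' a in \<open>simp add: field_simps\<close>)
  have B: "((\<lambda>x. (- cos (a * x) / a) * ((real n + 1) * x ^ n)) has_integral
         ((- cos (a*pi)/a) * pi ^ Suc n - (- cos (a*0)/a) * 0 ^ Suc n - snd (cs a (Suc n)))) {0..pi}"
  proof (rule has_integral_eq_rhs)
    show "((\<lambda>x. (- cos (a * x) / a) * ((real n + 1) * x ^ n)) has_integral
         (- (real n + 1) / a * fst (cs a n))) {0..pi}"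
    proof -
      have "(\<lambda>x. (- cos (a * x) / a) * ((real n + 1) * x ^ n)) = (\<lambda>x. (- (real n + 1) / a) * (x ^ n * cos (a * x)))"
        by (rule ext) (simp add: field_simps a)
      then show ?thesis
        using has_integral_cmul[OF conjunct1[OF Suc.IH], of "- (real n + 1) / a"] by simp
    qed
  qed (use s' c' a in \<open>simp add: field_simps\<close>)
  have 1: "((\<lambda>x. cos (a * x) * x ^ Suc n) has_integral fst (cs a (Suc n))) {0..pi}"
    apply (rule integration_by_parts[OF bounded_bilinear_mult, where g="\<lambda>x. x ^ Suc n" and
          f = "\<lambda>x. sin (a*x) / a" and g'="\<lambda>x. (real n + 1) * x ^ n"])
          apply simp
         apply (auto intro!: continuous_intros simp: a)[2]
       apply (auto simp: has_real_derivative_iff_has_vector_derivative[symmetric] a pow_deriv_aux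
            intro!: derivative_eq_intros)[2]
    using A by simp
  have 2: "((\<lambda>x. sin (a * x) * x ^ Suc n) has_integral snd (cs a (Suc n))) {0..pi}"
    apply (rule integration_by_parts[OF bounded_bilinear_mult, where g="\<lambda>x. x ^ Suc n" and
          f = "\<lambda>x. - cos (a*x) / a" and g'="\<lambda>x. (real n + 1) * x ^ n"])
          apply simp
         apply (auto intro!: continuous_intros simp: a)[2]
       apply (auto simp: has_real_derivative_iff_has_vector_derivative[symmetric] a pow_deriv_aux
            intro!: derivative_eq_intros)[2]
    using B by simp
  have "(\<lambda>x. x ^ Suc n * cos (a * x)) = (\<lambda>x. cos (a * x) * x ^ Suc n)"
       "(\<lambda>x. x ^ Suc n * sin (a * x)) = (\<lambda>x. sin (a * x) * x ^ Suc n)" by (auto simp: mult.commute)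
  note 1 = 1[folded this(1)] and 2 = 2[folded this(2)]
  show ?case using 1 2 by blast
qed


definition tt :: "real \<Rightarrow> nat \<Rightarrow> nat \<Rightarrow> real" where
  "tt a n j = (-1) ^ j * fact n / fact (n + 1 - 2 * j) * pi ^ (n + 1 - 2 * j) / a ^ (2 * j)"

lemma cs_step:
  assumes "a \<noteq> 0"
  shows "fst (cs a (Suc (Suc n))) = (real n + 2) * pi ^ Suc n / a^2 - (real n + 2) * (real n + 1) / a^2 * fst (cs a n)"
  using assms by (simp add: field_simps power2_eq_square)

lemma tt_shift: assumes a: "a \<noteq> 0" shows "tt a (Suc (Suc n)) (Suc j) = - ((real n + 2) * (real n + 1) / a^2) * tt a n j"
proof -
  have e: "Suc (Suc n) + 1 - 2 * Suc j = n + 1 - 2 * j" by simp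
  show ?thesis unfolding tt_def e
    using a by (simp add: field_simps power2_eq_square)
qed

lemma tt_one: assumes a: "a \<noteq> 0" shows "tt a (Suc (Suc n)) 1 = - ((real n + 2) * pi ^ Suc n / a^2)"
proof -
  have e: "Suc (Suc n) + 1 - 2 * 1 = Suc n" by simp
  have g: "fact (Suc (Suc n)) = (real n + 2) * (fact (Suc n) :: real)"
    by (subst fact_Suc[of "Suc n"]) (simp add: algebra_simps)
  have nz: "fact (Suc n) \<noteq> (0::real)" by simp
  have f: "(-1) ^ 1 * fact (Suc (Suc n)) / fact (Suc n) = - (real n + 2 :: real)"
    unfolding g using nz by simp
  show ?thesis unfolding tt_def e f using a by (simp add: power2_eq_square field_simps)
qed

lemma cs_closed:
  assumes "a \<noteq> 0"
  shows "fst (cs a n) = - (\<Sum>j = 1..n div 2. tt a n j)"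
proof (induction n rule: less_induct)
  case (less n)
  show ?case
  proof (cases n)
    case 0 then show ?thesis by simp
  next
    case (Suc n1)
    show ?thesis
    proof (cases n1)
      case 0 then show ?thesis using Suc by simp
    next
      case (Suc k)
      have nk: "n = Suc (Suc k)" using Suc \<open>n = Suc n1\<close> by simp
      have IH: "fst (cs a k) = - (\<Sum>j = 1..k div 2. tt a k j)" using less nk by simp
      have d: "Suc (Suc k) div 2 = Suc (k div 2)" by simp
      have "(\<Sum>j = 1..Suc (Suc k) div 2. tt a (Suc (Suc k)) j)
          = tt a (Suc (Suc k)) 1 + (\<Sum>j = Suc 1..Suc (k div 2). tt a (Suc (Suc k)) j)"
        unfolding d by (rule sum.atLeast_Suc_atMost) simp
      also have "(\<Sum>j = Suc 1..Suc (k div 2). tt a (Suc (Suc k)) j)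
          = (\<Sum>j = 1..k div 2. tt a (Suc (Suc k)) (Suc j))"
        by (rule sum.shift_bounds_cl_Suc_ivl)
      also have "\<dots> = - ((real k + 2) * (real k + 1) / a^2) * (\<Sum>j = 1..k div 2. tt a k j)"
        by (simp add: tt_shift[OF assms] sum_distrib_left)
      finally have S: "(\<Sum>j = 1..Suc (Suc k) div 2. tt a (Suc (Suc k)) j) = 
         tt a (Suc (Suc k)) 1 + - ((real k + 2) * (real k + 1) / a^2) * (\<Sum>j = 1..k div 2. tt a k j)" .
      show ?thesis unfolding nk cs_step[OF assms] IH S tt_one[OF assms]
        using assms by (simp add: field_simps)
    qed
  qed
qed

lemma sin_pow_complex:
  fixes x :: real
  shows "(-4) ^ m * sin x ^ (2 * m) =
    (\<Sum>l\<le>2*m. real (2*m choose l) * (-1) ^ l * cos ((2 * real l - 2 * real m) * x))"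
proof -
  have e1: "complex_of_real (sin x) * (2 * \<i>) = cis x + (- cis (-x))"
    by (simp add: complex_eq_iff)
  have "complex_of_real ((-4) ^ m * sin x ^ (2 * m)) = (complex_of_real (sin x) * (2 * \<i>)) ^ (2*m)"
  proof -
    have "(complex_of_real (sin x) * (2 * \<i>))^2 = (-4) * (complex_of_real (sin x))^2"
      by (simp add: power2_eq_square algebra_simps)
    have "complex_of_real ((-4) ^ m * sin x ^ (2 * m)) = (-4) ^ m * ((complex_of_real (sin x))^2) ^ m"
      by (simp add: power_mult)
    also have "\<dots> = ((-4) * (complex_of_real (sin x))^2) ^ m"
      by (simp only: power_mult_distrib)
    finally show ?thesis using \<open>_ = (-4) * _\<close> by (simp only: power_mult)
  qed
  also have "\<dots> = (\<Sum>l\<le>2*m. of_nat (2*m choose l) * cis x ^ l * (- cis (-x)) ^ (2*m - l))"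
    unfolding e1 by (rule binomial_ring)
  also have "\<dots> = (\<Sum>l\<le>2*m. complex_of_real (real (2*m choose l) * (-1) ^ l) * cis ((2 * real l - 2 * real m) * x))"
  proof (rule sum.cong[OF refl])
    fix l assume l: "l \<in> {..2*m}"
    have "(- cis (-x)) ^ (2*m - l) = (-1) ^ (2*m - l) * cis (- x) ^ (2*m - l)"
      by (rule power_minus)
    also have "(-1::complex) ^ (2*m - l) = (-1) ^ l"
    proof -
      have ev: "even (2*m - l) \<longleftrightarrow> even l" using l by (auto simp: even_diff_nat)
      show ?thesis by (simp only: minus_one_power_iff ev)
    qed
    finally have a: "(- cis (-x)) ^ (2*m - l) = (-1) ^ l * cis (- x) ^ (2*m - l)" .
    have b0: "cis x ^ l * cis (- x) ^ (2*m - l) = cis (real l * x + real (2*m - l) * (- x))"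
      by (simp only: Complex.DeMoivre cis_mult)
    have b1: "real l * x + real (2*m - l) * (- x) = (2 * real l - 2 * real m) * x"
      using l by (simp add: of_nat_diff algebra_simps)
    have b: "cis x ^ l * cis (- x) ^ (2*m - l) = cis ((2 * real l - 2 * real m) * x)"
      unfolding b0 b1 ..
    show "of_nat (2*m choose l) * cis x ^ l * (- cis (-x)) ^ (2*m - l) =
          complex_of_real (real (2*m choose l) * (-1) ^ l) * cis ((2 * real l - 2 * real m) * x)"
      unfolding a using b by (simp add: algebra_simps)
  qed
  finally have "complex_of_real ((-4) ^ m * sin x ^ (2 * m)) =
     (\<Sum>l\<le>2*m. complex_of_real (real (2*m choose l) * (-1) ^ l) * cis ((2 * real l - 2 * real m) * x))" .
  then have "Re (complex_of_real ((-4) ^ m * sin x ^ (2 * m))) =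
     Re (\<Sum>l\<le>2*m. complex_of_real (real (2*m choose l) * (-1) ^ l) * cis ((2 * real l - 2 * real m) * x))"
    by simp
  then show ?thesis by (simp add: Re_sum)
qed

lemma sin_pow_expand:
  fixes x :: real
  shows "sin x ^ (2 * m) = (real (2*m choose m) +
     2 * (\<Sum>k=1..m. (-1) ^ k * real (2*m choose (m+k)) * cos (2 * real k * x))) / 4 ^ m"
proof -
  define f where "f l = real (2*m choose l) * (-1) ^ l * cos ((2 * real l - 2 * real m) * x)" for l
  have "(\<Sum>l\<le>2*m. f l) = (\<Sum>l<m. f l) + (\<Sum>l=m..2*m. f l)"
  proof -
    have "{..2*m} = {..<m} \<union> {m..2*m}" by auto
    then show ?thesis by (simp add: sum.union_disjoint ivl_disj_int)
  qed
  also have "(\<Sum>l=m..2*m. f l) = f m + (\<Sum>l=Suc m..2*m. f l)"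
    by (rule sum.atLeast_Suc_atMost) simp
  also have "(\<Sum>l=Suc m..2*m. f l) = (\<Sum>k=1..m. f (k + m))"
    using sum.shift_bounds_cl_nat_ivl[of f 1 m m] by (simp add: mult_2)
  also have "(\<Sum>l<m. f l) = (\<Sum>k=1..m. f (m - k))"
    by (rule sum.reindex_bij_witness[where i="\<lambda>k. m - k" and j="\<lambda>l. m - l"]) auto
  finally have S: "(\<Sum>l\<le>2*m. f l) = f m + (\<Sum>k=1..m. f (m - k) + f (k + m))"
    by (simp add: sum.distrib)
  have T: "f (m - k) + f (k + m) = 2 * ((-1) ^ m * ((-1) ^ k * real (2*m choose (m+k)) * cos (2 * real k * x)))"
    if k: "k \<in> {1..m}" for k
  proof -
    have c1: "2*m choose (m - k) = 2*m choose (m+k)"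
      using k binomial_symmetric[of "m-k" "2*m"] by (simp add: add.commute)
    have p1: "(-1::real) ^ (m - k) = (-1) ^ m * (-1) ^ k"
    proof -
      have "m + k = (m - k) + 2*k" using k by simp
      then have "(-1::real)^(m+k) = (-1)^(m-k) * ((-1)^2)^k" by (simp only: power_add power_mult)
      then show ?thesis by (simp add: power_add)
    qed
    have cc: "cos ((2 * real (m - k) - 2 * real m) * x) = cos (2 * real k * x)"
    proof -
      have "(2 * real (m - k) - 2 * real m) * x = - (2 * real k * x)" using k by (simp add: of_nat_diff algebra_simps)
      then show ?thesis by simp
    qed
    have cc2: "cos ((2 * real (k + m) - 2 * real m) * x) = cos (2 * real k * x)"
      by (simp add: algebra_simps)
    show ?thesis unfolding f_def c1 p1 cc cc2 by (simp add: power_add algebra_simps)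
  qed
  have H: "(-4::real) ^ m * sin x ^ (2 * m) = (-1) ^ m * (real (2*m choose m) +
     2 * (\<Sum>k=1..m. (-1) ^ k * real (2*m choose (m+k)) * cos (2 * real k * x)))"
  proof -
    have U: "(\<Sum>k=1..m. f (m - k) + f (k + m)) = (\<Sum>k=1..m. 2 * ((-1) ^ m * ((-1) ^ k * real (2*m choose (m+k)) * cos (2 * real k * x))))"
      by (rule sum.cong[OF refl T])
    have V: "f m = (-1) ^ m * real (2*m choose m)" by (simp add: f_def)
    have "(-4::real) ^ m * sin x ^ (2 * m) = (\<Sum>l\<le>2*m. f l)"
      unfolding sin_pow_complex f_def by simp
    also have "\<dots> = (-1) ^ m * real (2*m choose m) + (\<Sum>k=1..m. 2 * ((-1) ^ m * ((-1) ^ k * real (2*m choose (m+k)) * cos (2 * real k * x))))"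
      unfolding S U V ..
    finally show ?thesis by (simp add: sum_distrib_left algebra_simps)
  qed
  define R where "R = real (2*m choose m) +
     2 * (\<Sum>k=1..m. (-1) ^ k * real (2*m choose (m+k)) * cos (2 * real k * x))"
  have W: "(4::real)^m * sin x^(2*m) = (-1)^m * ((-4)^m * sin x^(2*m))"
    by (simp add: mult.assoc[symmetric] flip: power_mult_distrib)
  have P: "(-1::real)^m * (-1)^m = 1" by (simp flip: power_mult_distrib)
  have "(4::real)^m * sin x^(2*m) = (-1)^m * ((-1)^m * R)" unfolding W H R_def ..
  also have "\<dots> = R" by (simp only: mult.assoc[symmetric] P mult_1)
  finally have "(4::real)^m * sin x^(2*m) = R" .
  then have "(4::real)^m * sin x^(2*m) = real (2*m choose m) +
     2 * (\<Sum>k=1..m. (-1) ^ k * real (2*m choose (m+k)) * cos (2 * real k * x))" unfolding R_def .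
  then show ?thesis by (simp add: field_simps)
qed

lemma term_eq:
  fixes n j k :: nat and c :: real
  assumes j: "1 \<le> j" "2 * j \<le> n" and k: "1 \<le> k"
  shows "2 * ((-1) ^ k * c * ((-1) ^ j * fact n / fact (n + 1 - 2 * j) * pi ^ (n + 1 - 2 * j) / (2 * real k) ^ (2 * j)))
     = pi ^ n * (fact n * ((-1) ^ j / ((2 * pi) ^ (2 * j - 1) * fact (n + 1 - 2 * j)) *
          ((-1) ^ k / real k ^ (2 * j) * c)))"
proof -
  obtain i where i: "j = Suc i" using j by (cases j) auto
  obtain r where r: "n + 1 - 2 * j = r" by blast
  have "n = r + (2 * i + 1)" using j r i by simp
  then have pn: "pi ^ n = pi ^ r * pi ^ (2 * i + 1)" by (simp only: power_add)
  have e1: "2 * j - 1 = 2 * i + 1" "2 * j = Suc (Suc (2 * i))" using i by auto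
  have rr: "n - Suc (i * 2) = r" using r i by simp
  have kk: "real k \<noteq> 0" using k by simp
  show ?thesis unfolding r pn e1 using kk
    by (simp add: field_simps power_mult_distrib rr)
qed

lemma cos_int:
  assumes k: "1 \<le> k"
  shows "((\<lambda>x. x ^ n * cos (2 * real k * x)) has_integral fst (cs (2 * real k) n)) {0..pi}"
proof -
  have e: "2 * real k * pi = real (2 * k) * pi" "pi * (2 * real k) = real (2 * k) * pi" by simp_all
  have "sin (2 * real k * pi) = 0" "cos (2 * real k * pi) = 1"
       "sin (pi * (2 * real k)) = 0" "cos (pi * (2 * real k)) = 1"
    unfolding e by (simp_all only: sin_npi cos_npi) (simp_all add: power_mult)
  from conjunct1[OF cs_integral[OF _ this]] k show ?thesis by simp
qed

lemma pow_int: "((\<lambda>x::real. x ^ n) has_integral pi ^ (n+1) / (n+1)) {0..pi}"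
proof -
  have "((\<lambda>x::real. x ^ n) has_integral (pi ^ (n+1) / (n+1) - 0 ^ (n+1) / (n+1))) {0..pi}"
    apply (rule fundamental_theorem_of_calculus)
     apply simp
    apply (auto simp: has_real_derivative_iff_has_vector_derivative[symmetric] pow_deriv_aux add.commute[of 1]
            intro!: derivative_eq_intros)
    done
  then show ?thesis by simp
qed

theorem theorem1:
  fixes n m :: nat
  shows "integral {0..pi} (\<lambda>x::real. x ^ n * sin x ^ (2 * m)) =
    pi ^ n / 4 ^ m *
      (pi * real ((2 * m) choose m) / real (n + 1)
       - fact n * (\<Sum>j = 1..n div 2.
           (-1) ^ j / ((2 * pi) ^ (2 * j - 1) * fact (n + 1 - 2 * j)) *
           (\<Sum>\<^sub>\<infinity>k\<in>{1::nat..}. (-1) ^ k / real k ^ (2 * j) * real ((2 * m) choose (m + k)))))"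
proof -
  define C0 where "C0 = real (2*m choose m)"
  define Ck where "Ck k = real (2*m choose (m+k))" for k
  have HI: "((\<lambda>x. x ^ n * sin x ^ (2 * m)) has_integral
      (C0 * (pi ^ (n+1) / (n+1)) + 2 * (\<Sum>k=1..m. (-1)^k * Ck k * fst (cs (2 * real k) n))) / 4^m) {0..pi}"
  proof -
    have "((\<lambda>x. (C0 * x ^ n + 2 * (\<Sum>k=1..m. (-1)^k * Ck k * (x ^ n * cos (2 * real k * x)))) / 4^m) has_integral
      (C0 * (pi ^ (n+1) / (n+1)) + 2 * (\<Sum>k=1..m. (-1)^k * Ck k * fst (cs (2 * real k) n))) / 4^m) {0..pi}"
      apply (rule has_integral_divide)
      apply (rule has_integral_add)
       apply (rule has_integral_mult_right)
       apply (rule pow_int)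
      apply (rule has_integral_mult_right)
      apply (rule has_integral_sum)
       apply simp
      apply (rule has_integral_mult_right)
      apply (rule cos_int)
      apply simp
      done
    moreover have "(\<lambda>x. (C0 * x ^ n + 2 * (\<Sum>k=1..m. (-1)^k * Ck k * (x ^ n * cos (2 * real k * x)))) / 4^m)
        = (\<lambda>x. x ^ n * sin x ^ (2 * m))"
    proof
      fix x :: real
      show "(C0 * x ^ n + 2 * (\<Sum>k=1..m. (-1)^k * Ck k * (x ^ n * cos (2 * real k * x)))) / 4^m = x ^ n * sin x ^ (2 * m)"
        unfolding sin_pow_expand[of x m] C0_def Ck_def
        by (simp add: field_simps sum_distrib_left sum_distrib_right)
    qed
    ultimately show ?thesis by simp
  qed
  have inf: "(\<Sum>\<^sub>\<infinity>k\<in>{1::nat..}. (-1) ^ k / real k ^ (2 * j) * real ((2 * m) choose (m + k)))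
      = (\<Sum>k=1..m. (-1) ^ k / real k ^ (2 * j) * Ck k)" for j
  proof -
    have "(\<Sum>\<^sub>\<infinity>k\<in>{1::nat..}. (-1) ^ k / real k ^ (2 * j) * real ((2 * m) choose (m + k)))
      = (\<Sum>\<^sub>\<infinity>k\<in>{1..m}. (-1) ^ k / real k ^ (2 * j) * real ((2 * m) choose (m + k)))"
      by (rule infsum_cong_neutral) auto
    then show ?thesis by (simp add: Ck_def)
  qed
  have swap: "2 * (\<Sum>k=1..m. (-1)^k * Ck k * (\<Sum>j = 1..n div 2. tt (2 * real k) n j))
     = pi ^ n * (fact n * (\<Sum>j = 1..n div 2.
           (-1) ^ j / ((2 * pi) ^ (2 * j - 1) * fact (n + 1 - 2 * j)) *
           (\<Sum>k=1..m. (-1) ^ k / real k ^ (2 * j) * Ck k)))"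
  proof -
    have "2 * (\<Sum>k=1..m. (-1)^k * Ck k * (\<Sum>j = 1..n div 2. tt (2 * real k) n j))
        = (\<Sum>k=1..m. \<Sum>j = 1..n div 2. 2 * ((-1)^k * Ck k * tt (2 * real k) n j))"
      by (simp add: sum_distrib_left)
    also have "\<dots> = (\<Sum>j = 1..n div 2. \<Sum>k=1..m. 2 * ((-1)^k * Ck k * tt (2 * real k) n j))"
      by (rule sum.swap)
    also have "\<dots> = (\<Sum>j = 1..n div 2. \<Sum>k=1..m. pi ^ n * (fact n * ((-1) ^ j / ((2 * pi) ^ (2 * j - 1) * fact (n + 1 - 2 * j)) *
          ((-1) ^ k / real k ^ (2 * j) * Ck k))))"
    proof (intro sum.cong refl)
      fix j k assume j: "j \<in> {1..n div 2}" and k: "k \<in> {1..m}"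
      show "2 * ((-1)^k * Ck k * tt (2 * real k) n j) = pi ^ n * (fact n * ((-1) ^ j / ((2 * pi) ^ (2 * j - 1) * fact (n + 1 - 2 * j)) *
          ((-1) ^ k / real k ^ (2 * j) * Ck k)))"
        unfolding tt_def using j k by (intro term_eq) auto
    qed
    also have "\<dots> = pi ^ n * (fact n * (\<Sum>j = 1..n div 2.
           (-1) ^ j / ((2 * pi) ^ (2 * j - 1) * fact (n + 1 - 2 * j)) *
           (\<Sum>k=1..m. (-1) ^ k / real k ^ (2 * j) * Ck k)))"
      by (simp add: sum_distrib_left)
    finally show ?thesis .
  qed
  have "integral {0..pi} (\<lambda>x::real. x ^ n * sin x ^ (2 * m)) =
      (C0 * (pi ^ (n+1) / (n+1)) + 2 * (\<Sum>k=1..m. (-1)^k * Ck k * fst (cs (2 * real k) n))) / 4^m"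
    using HI by (rule integral_unique)
  also have "\<dots> = (C0 * (pi ^ (n+1) / (n+1)) - 2 * (\<Sum>k=1..m. (-1)^k * Ck k * (\<Sum>j = 1..n div 2. tt (2 * real k) n j))) / 4^m"
    by (simp add: cs_closed sum_negf)
  also have "\<dots> = pi ^ n / 4 ^ m *
      (pi * real ((2 * m) choose m) / real (n + 1)
       - fact n * (\<Sum>j = 1..n div 2.
           (-1) ^ j / ((2 * pi) ^ (2 * j - 1) * fact (n + 1 - 2 * j)) *
           (\<Sum>\<^sub>\<infinity>k\<in>{1::nat..}. (-1) ^ k / real k ^ (2 * j) * real ((2 * m) choose (m + k)))))"
    unfolding swap inf C0_def by (simp add: field_simps)
  finally show ?thesis .
qed

end
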